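(* Let $E$ be a finite set, $\mathcal{F}\subseteq 2^E$ a downward-closed family, $b_1,\dots,b_\ell\in\mathbb{R}_{\ge0}^{|E|}$, and $f(\boldsymbol{w})=\max_{S\in\mathcal{F}}\max_{i\in[\ell]}\langle b_i,\boldsymbol{w}_S\rangle$ for $\boldsymbol{w}\in\mathbb{R}_{\ge0}^{|E|}$. Let $L=\max_{S\in\mathcal{F},\,i\in[\ell],\,j\in E}a^S_{ij}$, where $a^S_{ij}=b_{ij}\cdot\mathbf{1}_{j\in S}$, and assume $L>0$. Then: (1) $f$ is $L$-Lipschitz: $|f(\boldsymbol{u})-f(\boldsymbol{v})|\le L\|\boldsymbol{u}-\boldsymbol{v}\|_1$; (2) $f$ is monotone: if $\boldsymbol{u}\ge\boldsymbol{v}$ coordinate-wise then $f(\boldsymbol{u})\ge f(\boldsymbol{v})$; (3) for every $\tau>0$, the function $f/(\tau L)$ restricted to the domain $[0,\tau]^{|E|}$ is self-bounding.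
   Context: For $S\subseteq E$ and $\boldsymbol{w}\in\mathbb{R}_{\ge0}^{|E|}$, $\boldsymbol{w}_S$ denotes the vector equal to $w_e$ on coordinates $e\in S$ and $0$ elsewhere; $b_{ij}$ is the $j$-th coordinate of $b_i$. A family $\mathcal{F}$ is downward-closed if $S\in\mathcal{F}$ and $T\subseteq S$ imply $T\in\mathcal{F}$. A function $g:\mathcal{X}\to\mathbb{R}$ on a product space $\mathcal{X}=\mathcal{X}_1\times\dots\times\mathcal{X}_n$ is self-bounding if there exist functions $g_i:\mathcal{X}^{(i)}\to\mathbb{R}$, $i\in[n]$, where $\mathcal{X}^{(i)}$ is the product of all factors except the $i$-th and $\boldsymbol{x}^{(i)}$ is $\boldsymbol{x}$ with the $i$-th coordinate removed, such that for all $\boldsymbol{x}$: $0\le g(\boldsymbol{x})-g_i(\boldsymbol{x}^{(i)})\le1$ for every $i$, and $\sum_{i}\big(g(\boldsymbol{x})-g_i(\boldsymbol{x}^{(i)})\big)\le g(\boldsymbol{x})$. *)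

theory Defs
  imports Complex_Main "HOL-Library.FuncSet"
begin

definition downward_closed :: "'e set set \<Rightarrow> bool" where
  "downward_closed F \<longleftrightarrow> (\<forall>S\<in>F. \<forall>T. T \<subseteq> S \<longrightarrow> T \<in> F)"

definition restrict_vec :: "('e \<Rightarrow> real) \<Rightarrow> 'e set \<Rightarrow> 'e \<Rightarrow> real" where
  "restrict_vec w S = (\<lambda>e. if e \<in> S then w e else 0)"

definition inner_E :: "'e set \<Rightarrow> ('e \<Rightarrow> real) \<Rightarrow> ('e \<Rightarrow> real) \<Rightarrow> real" where
  "inner_E E x y = (\<Sum>j\<in>E. x j * y j)"

definition fmax :: "'e set \<Rightarrow> 'e set set \<Rightarrow> nat \<Rightarrow> (nat \<Rightarrow> 'e \<Rightarrow> real) \<Rightarrow> ('e \<Rightarrow> real) \<Rightarrow> real" where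
  "fmax E F l b w = Max {inner_E E (b i) (restrict_vec w S) | S i. S \<in> F \<and> i \<in> {1..l}}"

definition Lconst :: "'e set \<Rightarrow> 'e set set \<Rightarrow> nat \<Rightarrow> (nat \<Rightarrow> 'e \<Rightarrow> real) \<Rightarrow> real" where
  "Lconst E F l b = Max {b i j * (if j \<in> S then 1 else 0) | S i j. S \<in> F \<and> i \<in> {1..l} \<and> j \<in> E}"

definition l1dist :: "'e set \<Rightarrow> ('e \<Rightarrow> real) \<Rightarrow> ('e \<Rightarrow> real) \<Rightarrow> real" where
  "l1dist E u v = (\<Sum>j\<in>E. \<bar>u j - v j\<bar>)"

text \<open>Self-bounding function on the product space PiE I X (coordinates indexed by I).
  x^(i) is x with coordinate i removed, i.e. restrict x (I - {i}) in PiE (I - {i}) X.\<close>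
definition self_bounding :: "'i set \<Rightarrow> ('i \<Rightarrow> 'a set) \<Rightarrow> (('i \<Rightarrow> 'a) \<Rightarrow> real) \<Rightarrow> bool" where
  "self_bounding I X g \<longleftrightarrow>
     (\<exists>G :: 'i \<Rightarrow> ('i \<Rightarrow> 'a) \<Rightarrow> real.
        \<forall>x \<in> PiE I X.
          (\<forall>i\<in>I. 0 \<le> g x - G i (restrict x (I - {i})) \<and> g x - G i (restrict x (I - {i})) \<le> 1)
          \<and> (\<Sum>i\<in>I. g x - G i (restrict x (I - {i}))) \<le> g x)"

end

theory Submission
  imports Defs
begin

lemma fset_eq:
  "{inner_E E (b i) (restrict_vec w S) | S i. S \<in> F \<and> i \<in> {1..l}}
   = (\<lambda>(S,i). inner_E E (b i) (restrict_vec w S)) ` (F \<times> {1..l})"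
proof (rule set_eqI, rule iffI)
  fix y assume "y \<in> {inner_E E (b i) (restrict_vec w S) | S i. S \<in> F \<and> i \<in> {1..l}}"
  then obtain S i where "y = inner_E E (b i) (restrict_vec w S)" "S \<in> F" "i \<in> {1..l}" by blast
  then show "y \<in> (\<lambda>(S,i). inner_E E (b i) (restrict_vec w S)) ` (F \<times> {1..l})"
    by (intro image_eqI[where x="(S,i)"]) auto
next
  fix y assume "y \<in> (\<lambda>(S,i). inner_E E (b i) (restrict_vec w S)) ` (F \<times> {1..l})"
  then obtain S i where "y = inner_E E (b i) (restrict_vec w S)" "S \<in> F" "i \<in> {1..l}" by auto
  then show "y \<in> {inner_E E (b i) (restrict_vec w S) | S i. S \<in> F \<and> i \<in> {1..l}}" by blast
qed

lemma Lset_eq: "{b i j * (if j \<in> S then 1 else 0) | S i j. S \<in> F \<and> i \<in> {1..l} \<and> j \<in> E}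
     = (\<lambda>(S,i,j). b i j * (if j \<in> S then 1 else 0)) ` (F \<times> {1..l} \<times> E)"
proof (rule set_eqI, rule iffI)
  fix y assume "y \<in> {b i j * (if j \<in> S then 1 else 0) | S i j. S \<in> F \<and> i \<in> {1..l} \<and> j \<in> E}"
  then obtain S i j where "y = b i j * (if j \<in> S then 1 else 0)" "S \<in> F" "i \<in> {1..l}" "j \<in> E" by blast
  then show "y \<in> (\<lambda>(S,i,j). b i j * (if j \<in> S then 1 else 0)) ` (F \<times> {1..l} \<times> E)"
    by (intro image_eqI[where x="(S,i,j)"]) auto
next
  fix y assume "y \<in> (\<lambda>(S,i,j). b i j * (if j \<in> S then 1 else 0)) ` (F \<times> {1..l} \<times> E)"
  then obtain S i j where "y = b i j * (if j \<in> S then 1 else 0)" "S \<in> F" "i \<in> {1..l}" "j \<in> E" by auto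
  then show "y \<in> {b i j * (if j \<in> S then 1 else 0) | S i j. S \<in> F \<and> i \<in> {1..l} \<and> j \<in> E}" by blast
qed

lemma fmax_ge:
  assumes "finite E" "F \<subseteq> Pow E" "S \<in> F" "i \<in> {1..l}"
  shows "inner_E E (b i) (restrict_vec w S) \<le> fmax E F l b w"
proof -
  have "finite F" using assms(1,2) by (meson finite_Pow_iff finite_subset)
  then show ?thesis unfolding fmax_def fset_eq using assms(3,4)
    by (intro Max_ge) auto
qed

lemma fmax_att:
  assumes "finite E" "F \<subseteq> Pow E" "F \<noteq> {}" "l \<ge> 1"
  shows "\<exists>S\<in>F. \<exists>i\<in>{1..l}. fmax E F l b w = inner_E E (b i) (restrict_vec w S)"
proof -
  have "finite F" using assms(1,2) by (meson finite_Pow_iff finite_subset)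
  moreover have "F \<times> {1..l} \<noteq> {}" using assms(3,4) by auto
  ultimately have "fmax E F l b w \<in> (\<lambda>(S,i). inner_E E (b i) (restrict_vec w S)) ` (F \<times> {1..l})"
    unfolding fmax_def fset_eq by (intro Max_in) auto
  then show ?thesis by auto
qed

lemma L_ge:
  assumes "finite E" "F \<subseteq> Pow E" "S \<in> F" "i \<in> {1..l}" "j \<in> E"
  shows "b i j * (if j \<in> S then 1 else 0) \<le> Lconst E F l b"
proof -
  have "finite F" using assms(1,2) by (meson finite_Pow_iff finite_subset)
  show ?thesis unfolding Lconst_def Lset_eq
  proof (rule Max_ge)
    show "finite ((\<lambda>(S,i,j). b i j * (if j \<in> S then 1 else 0)) ` (F \<times> {1..l} \<times> E))"
      using \<open>finite F\<close> assms(1) by simp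
    show "b i j * (if j \<in> S then 1 else 0) \<in> (\<lambda>(S,i,j). b i j * (if j \<in> S then 1 else 0)) ` (F \<times> {1..l} \<times> E)"
      by (rule image_eqI[where x="(S,i,j)"]) (use assms in auto)
  qed
qed

lemma inner_expand:
  "inner_E E (b i) (restrict_vec w S) = (\<Sum>j\<in>E. b i j * (if j \<in> S then w j else 0))"
  unfolding inner_E_def restrict_vec_def by simp

lemma fmax_cong:
  assumes "\<forall>j\<in>E. u j = v j"
  shows "fmax E F l b u = fmax E F l b v"
proof -
  have "\<And>S i. inner_E E (b i) (restrict_vec u S) = inner_E E (b i) (restrict_vec v S)"
    unfolding inner_expand using assms by (intro sum.cong) auto
  then show ?thesis unfolding fmax_def by simp
qed

lemma inner_mono:
  assumes "\<forall>j\<in>E. b i j \<ge> 0" "\<forall>j\<in>E. u j \<ge> v j"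
  shows "inner_E E (b i) (restrict_vec v S) \<le> inner_E E (b i) (restrict_vec u S)"
  unfolding inner_expand using assms by (intro sum_mono) (auto intro: mult_left_mono)

lemma inner_lip:
  assumes "finite E" "F \<subseteq> Pow E" "S \<in> F" "i \<in> {1..l}" "\<forall>j\<in>E. b i j \<ge> 0"
  shows "inner_E E (b i) (restrict_vec u S) - inner_E E (b i) (restrict_vec v S)
         \<le> Lconst E F l b * l1dist E u v"
proof -
  have "inner_E E (b i) (restrict_vec u S) - inner_E E (b i) (restrict_vec v S)
      = (\<Sum>j\<in>E. (b i j * (if j \<in> S then 1 else 0)) * (u j - v j))"
    unfolding inner_expand sum_subtractf[symmetric] by (intro sum.cong) (auto simp: algebra_simps)
  also have "\<dots> \<le> (\<Sum>j\<in>E. Lconst E F l b * \<bar>u j - v j\<bar>)"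
  proof (intro sum_mono)
    fix j assume j: "j \<in> E"
    have a: "b i j * (if j \<in> S then 1 else 0) \<le> Lconst E F l b" using L_ge[OF assms(1-4) j] .
    have b0: "0 \<le> b i j * (if j \<in> S then 1 else 0)" using assms(5) j by auto
    have "(b i j * (if j \<in> S then 1 else 0)) * (u j - v j) \<le> (b i j * (if j \<in> S then 1 else 0)) * \<bar>u j - v j\<bar>"
      using b0 by (intro mult_left_mono) auto
    also have "\<dots> \<le> Lconst E F l b * \<bar>u j - v j\<bar>" using a by (intro mult_right_mono) auto
    finally show "(b i j * (if j \<in> S then 1 else 0)) * (u j - v j) \<le> Lconst E F l b * \<bar>u j - v j\<bar>" .
  qed
  also have "\<dots> = Lconst E F l b * l1dist E u v" unfolding l1dist_def sum_distrib_left ..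
  finally show ?thesis .
qed

theorem proposition5:
  fixes E :: "'e set" and F :: "'e set set" and l :: nat and b :: "nat \<Rightarrow> 'e \<Rightarrow> real"
  assumes finE: "finite E" and Ene: "E \<noteq> {}"
    and FE: "F \<subseteq> Pow E" and Fne: "F \<noteq> {}" and dc: "downward_closed F"
    and l1: "l \<ge> 1"
    and bnn: "\<forall>i\<in>{1..l}. \<forall>j\<in>E. b i j \<ge> 0"
    and Lpos: "Lconst E F l b > 0"
  shows
    "(\<forall>u v. (\<forall>j\<in>E. u j \<ge> 0) \<longrightarrow> (\<forall>j\<in>E. v j \<ge> 0) \<longrightarrow>
        \<bar>fmax E F l b u - fmax E F l b v\<bar> \<le> Lconst E F l b * l1dist E u v)
     \<and> (\<forall>u v. (\<forall>j\<in>E. v j \<ge> 0) \<longrightarrow> (\<forall>j\<in>E. u j \<ge> v j) \<longrightarrow>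
        fmax E F l b u \<ge> fmax E F l b v)
     \<and> (\<forall>\<tau>::real. \<tau> > 0 \<longrightarrow>
        self_bounding E (\<lambda>_. {0..\<tau>}) (\<lambda>x. fmax E F l b x / (\<tau> * Lconst E F l b)))"
proof -
  let ?f = "fmax E F l b" and ?L = "Lconst E F l b"
  have half: "?f u - ?f v \<le> ?L * l1dist E u v" for u v
  proof -
    obtain S i where Si: "S \<in> F" "i \<in> {1..l}" "?f u = inner_E E (b i) (restrict_vec u S)"
      using fmax_att[OF finE FE Fne l1] by blast
    have "inner_E E (b i) (restrict_vec u S) - inner_E E (b i) (restrict_vec v S) \<le> ?L * l1dist E u v"
      using inner_lip[OF finE FE Si(1,2)] bnn Si(2) by blast
    moreover have "inner_E E (b i) (restrict_vec v S) \<le> ?f v" using fmax_ge[OF finE FE Si(1,2)] .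
    ultimately show ?thesis using Si(3) by linarith
  qed
  have P1: "\<bar>?f u - ?f v\<bar> \<le> ?L * l1dist E u v" for u v
  proof -
    have "l1dist E v u = l1dist E u v" unfolding l1dist_def by (simp add: abs_minus_commute)
    then show ?thesis using half[of u v] half[of v u] by auto
  qed
  have P2: "?f v \<le> ?f u" if "\<forall>j\<in>E. u j \<ge> v j" for u v
  proof -
    obtain S i where Si: "S \<in> F" "i \<in> {1..l}" "?f v = inner_E E (b i) (restrict_vec v S)"
      using fmax_att[OF finE FE Fne l1] by blast
    have "inner_E E (b i) (restrict_vec v S) \<le> inner_E E (b i) (restrict_vec u S)"
      using inner_mono[of E b i v u S] bnn Si(2) that by blast
    also have "\<dots> \<le> ?f u" using fmax_ge[OF finE FE Si(1,2)] .
    finally show ?thesis using Si(3) by simp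
  qed
  have P3: "self_bounding E (\<lambda>_. {0..\<tau>}) (\<lambda>x. ?f x / (\<tau> * ?L))" if tau: "\<tau> > 0" for \<tau>
    unfolding self_bounding_def
  proof (intro exI[of _ "\<lambda>i y. ?f (y(i:=0)) / (\<tau> * ?L)"] ballI)
    fix x assume x: "x \<in> PiE E (\<lambda>_. {0..\<tau>})"
    have xr: "0 \<le> x j \<and> x j \<le> \<tau>" if "j \<in> E" for j using x that by (auto simp: PiE_iff)
    obtain S i0 where Si: "S \<in> F" "i0 \<in> {1..l}" "?f x = inner_E E (b i0) (restrict_vec x S)"
      using fmax_att[OF finE FE Fne l1] by blast
    define c where "c j = b i0 j * (if j \<in> S then x j else 0)" for j
    have fx: "?f x = (\<Sum>j\<in>E. c j)" using Si(3) unfolding inner_expand c_def .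
    have cL: "c j \<le> ?L * \<tau>" if j: "j \<in> E" for j
    proof -
      have "c j = (b i0 j * (if j \<in> S then 1 else 0)) * x j" unfolding c_def by simp
      also have "\<dots> \<le> ?L * x j" using L_ge[OF finE FE Si(1,2) j] xr[OF j] by (intro mult_right_mono) auto
      also have "\<dots> \<le> ?L * \<tau>" using xr[OF j] Lpos by (intro mult_left_mono) auto
      finally show ?thesis .
    qed
    have D: "0 \<le> ?f x - ?f ((restrict x (E - {i}))(i:=0)) \<and> ?f x - ?f ((restrict x (E - {i}))(i:=0)) \<le> c i"
      if i: "i \<in> E" for i
    proof -
      have eq: "?f ((restrict x (E - {i}))(i:=0)) = ?f (x(i:=0))"
        by (rule fmax_cong) auto
      have "0 \<le> ?f x - ?f (x(i:=0))" using P2[of "x(i:=0)" x] xr by auto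
      moreover have "inner_E E (b i0) (restrict_vec (x(i:=0)) S) \<le> ?f (x(i:=0))"
        using fmax_ge[OF finE FE Si(1,2)] .
      moreover have "inner_E E (b i0) (restrict_vec (x(i:=0)) S) = (\<Sum>j\<in>E. c j) - c i"
      proof -
        have "inner_E E (b i0) (restrict_vec (x(i:=0)) S) = (\<Sum>j\<in>E. if j = i then 0 else c j)"
          unfolding inner_expand c_def by (intro sum.cong) auto
        also have "\<dots> = (\<Sum>j\<in>E. c j) - c i"
        proof -
          have "(\<Sum>j\<in>E. c j) = (\<Sum>j\<in>E. (if j = i then 0 else c j) + (if j = i then c i else 0))"
            by (intro sum.cong) auto
          also have "\<dots> = (\<Sum>j\<in>E. if j = i then 0 else c j) + c i"
            using finE i by (simp add: sum.distrib sum.delta)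
          finally show ?thesis by simp
        qed
        finally show ?thesis .
      qed
      ultimately show ?thesis using eq fx by linarith
    qed
    have tl: "\<tau> * ?L > 0" using tau Lpos by simp
    show "(\<forall>i\<in>E. 0 \<le> ?f x / (\<tau> * ?L) - ?f ((restrict x (E - {i}))(i := 0)) / (\<tau> * ?L) \<and>
               ?f x / (\<tau> * ?L) - ?f ((restrict x (E - {i}))(i := 0)) / (\<tau> * ?L) \<le> 1) \<and>
          (\<Sum>i\<in>E. ?f x / (\<tau> * ?L) - ?f ((restrict x (E - {i}))(i := 0)) / (\<tau> * ?L)) \<le> ?f x / (\<tau> * ?L)"
    proof (intro conjI ballI)
      fix i assume i: "i \<in> E"
      have e: "?f x / (\<tau> * ?L) - ?f ((restrict x (E - {i}))(i := 0)) / (\<tau> * ?L)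
         = (?f x - ?f ((restrict x (E - {i}))(i := 0))) / (\<tau> * ?L)" by (simp add: diff_divide_distrib)
      show "0 \<le> ?f x / (\<tau> * ?L) - ?f ((restrict x (E - {i}))(i := 0)) / (\<tau> * ?L)"
        unfolding e using D[OF i] tl by simp
      have "?f x - ?f ((restrict x (E - {i}))(i := 0)) \<le> \<tau> * ?L" using D[OF i] cL[OF i] by (simp add: mult.commute)
      then show "?f x / (\<tau> * ?L) - ?f ((restrict x (E - {i}))(i := 0)) / (\<tau> * ?L) \<le> 1"
        unfolding e using tl by (simp add: divide_le_eq)
    next
      have "(\<Sum>i\<in>E. ?f x / (\<tau> * ?L) - ?f ((restrict x (E - {i}))(i := 0)) / (\<tau> * ?L))
          = (\<Sum>i\<in>E. ?f x - ?f ((restrict x (E - {i}))(i := 0))) / (\<tau> * ?L)"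
        by (simp add: sum_divide_distrib diff_divide_distrib)
      also have "\<dots> \<le> (\<Sum>i\<in>E. c i) / (\<tau> * ?L)"
        using D tl by (intro divide_right_mono sum_mono) auto
      finally show "(\<Sum>i\<in>E. ?f x / (\<tau> * ?L) - ?f ((restrict x (E - {i}))(i := 0)) / (\<tau> * ?L)) \<le> ?f x / (\<tau> * ?L)"
        using fx by simp
    qed
  qed
  show ?thesis using P1 P2 P3 by blast
qed

end
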